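(* Let $\epsilon$ be a constant with $0<\epsilon<1/3$. The $(1+1)$~IA$^{hyp}$ finds an optimal solution of the instance $P^*_\epsilon$ (with $n$ even) in $O(n^2)$ expected fitness function evaluations.
   Context: Partition problem: a solution $x\in\{0,1\}^n$ assigns job $i$ to machine $M_1$ if $x_i=0$ and to $M_2$ if $x_i=1$; the makespan $f(x)=\max\{\sum_i p_ix_i,\sum_i p_i(1-x_i)\}$ is minimised. The instance $P^*_\epsilon$ has $n$ jobs with $p_1=p_2=\frac13-\frac{\epsilon}{4}$ and $p_i=\frac{1/3+\epsilon/2}{n-2}$ for $3\le i\le n$. The $(1+1)$~IA$^{hyp}$ (minimisation): initialise $x$ uniformly at random and evaluate it. Each iteration: $y:=x$, $F:=\{1,\dots,n\}$; while $F\ne\emptyset$ and $f(y)\ge f(x)$: pick $i\in F$ uniformly at random, remove it from $F$, flip $y_i$, evaluate $f(y)$; then if $f(y)\le f(x)$ set $x:=y$. Asymptotics are as $n\to\infty$. *)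

theory Defs
  imports "HOL-Probability.Probability"
begin

text \<open>Solutions are bit strings of length n, represented as bool lists;
  job i (0-based) goes to machine M2 iff xs!i = True.\<close>

definition makespan :: "(nat \<Rightarrow> real) \<Rightarrow> bool list \<Rightarrow> real" where
  "makespan p xs = max (\<Sum>i<length xs. if xs ! i then p i else 0)
                       (\<Sum>i<length xs. if xs ! i then 0 else p i)"

text \<open>The instance P*_eps with n jobs (jobs 1,2 of the paper are indices 0,1 here).\<close>
definition P_star :: "real \<Rightarrow> nat \<Rightarrow> nat \<Rightarrow> real" where
  "P_star eps n i = (if i < 2 then 1/3 - eps/4 else (1/3 + eps/2) / (real n - 2))"

definition flip :: "bool list \<Rightarrow> nat \<Rightarrow> bool list" where
  "flip xs i = xs[i := \<not> xs ! i]"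

definition is_optimal :: "(bool list \<Rightarrow> real) \<Rightarrow> nat \<Rightarrow> bool list \<Rightarrow> bool" where
  "is_optimal f n xs \<longleftrightarrow> length xs = n \<and> (\<forall>ys. length ys = n \<longrightarrow> f xs \<le> f ys)"

text \<open>Hypermutation with stop at first constructive mutation (minimisation):
  returns the final y and the number of fitness evaluations performed.\<close>
function hyp_loop :: "(bool list \<Rightarrow> real) \<Rightarrow> bool list \<Rightarrow> bool list \<Rightarrow> nat set
                       \<Rightarrow> (bool list \<times> nat) pmf" where
  "hyp_loop f x y F =
     (if F = {} \<or> infinite F \<or> f y < f x then return_pmf (y, 0)
      else pmf_of_set F \<bind> (\<lambda>i. map_pmf (\<lambda>(z, c). (z, Suc c)) (hyp_loop f x (flip y i) (F - {i}))))"
  by auto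
termination
  by (relation "Wellfounded.measure (\<lambda>(f, x, y, F). card F)")
     (auto simp: set_pmf_of_set card_gt_0_iff)

definition ia_step :: "(bool list \<Rightarrow> real) \<Rightarrow> nat \<Rightarrow> bool list \<Rightarrow> (bool list \<times> nat) pmf" where
  "ia_step f n x = map_pmf (\<lambda>(y, c). (if f y \<le> f x then y else x, c)) (hyp_loop f x x {..<n})"

primrec ia_cost :: "(bool list \<Rightarrow> real) \<Rightarrow> nat \<Rightarrow> nat \<Rightarrow> bool list \<Rightarrow> ennreal" where
  "ia_cost f n 0 x = 0"
| "ia_cost f n (Suc t) x =
     (if is_optimal f n x then 0
      else \<integral>\<^sup>+ yc. (ennreal (real (snd yc)) + ia_cost f n t (fst yc)) \<partial>measure_pmf (ia_step f n x))"

text \<open>Expected number of fitness evaluations until an optimum is found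
  (1 for evaluating the uniformly random initial solution).\<close>
definition ia_runtime :: "(bool list \<Rightarrow> real) \<Rightarrow> nat \<Rightarrow> ennreal" where
  "ia_runtime f n = \<integral>\<^sup>+ x. (1 + (SUP t. ia_cost f n t x))
                       \<partial>measure_pmf (pmf_of_set {xs :: bool list. length xs = n})"

end

theory Submission
  imports Defs
begin

declare hyp_loop.simps[simp del]

lemma prob_bind_pmf_of_set:
  assumes "finite F" "F \<noteq> {}"
  shows "measure_pmf.prob (pmf_of_set F \<bind> g) A = (\<Sum>i\<in>F. measure_pmf.prob (g i) A) / real (card F)"
proof -
  have c: "card F > 0" using assms by (simp add: card_gt_0_iff)
  have "ennreal (measure_pmf.prob (pmf_of_set F \<bind> g) A) = emeasure (measure_pmf (pmf_of_set F \<bind> g)) A"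
    by (simp add: measure_pmf.emeasure_eq_measure)
  also have "\<dots> = (\<Sum>i\<in>F. emeasure (measure_pmf (g i)) A) / of_nat (card F)"
    using assms by (simp add: emeasure_bind_pmf nn_integral_pmf_of_set)
  also have "\<dots> = (\<Sum>i\<in>F. ennreal (measure_pmf.prob (g i) A)) / ennreal (real (card F))"
    by (simp add: measure_pmf.emeasure_eq_measure ennreal_of_nat_eq_real_of_nat)
  also have "\<dots> = ennreal ((\<Sum>i\<in>F. measure_pmf.prob (g i) A) / real (card F))"
    using c by (simp add: divide_ennreal sum_nonneg)
  finally show ?thesis
    by (subst (asm) ennreal_inj) (auto intro!: divide_nonneg_nonneg sum_nonneg)
qed

lemma hyp_loop_set:
  "zc \<in> set_pmf (hyp_loop f x y F) \<Longrightarrow> length (fst zc) = length y \<and> snd zc \<le> card F"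
proof (induction f x y F arbitrary: zc rule: hyp_loop.induct)
  case (1 f x y F)
  show ?case
  proof (cases "F = {} \<or> infinite F \<or> f y < f x")
    case True
    then show ?thesis using "1.prems" by (subst (asm) hyp_loop.simps) auto
  next
    case False
    then have fin: "finite F" "F \<noteq> {}" by auto
    from "1.prems" False obtain i z c where i: "i \<in> F" and zc: "zc = (z, Suc c)"
      and mem: "(z, c) \<in> set_pmf (hyp_loop f x (flip y i) (F - {i}))"
      by (subst (asm) hyp_loop.simps) (auto simp: set_pmf_of_set fin)
    have "length z = length (flip y i) \<and> c \<le> card (F - {i})"
      using "1.IH"[OF False _ mem] i fin by (simp add: set_pmf_of_set)
    moreover have "card (F - {i}) < card F" using i fin card_gt_0_iff[of F] by simp
    ultimately show ?thesis using zc by (simp add: flip_def)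
  qed
qed

definition flips :: "bool list \<Rightarrow> nat set \<Rightarrow> bool list" where
  "flips y R = map (\<lambda>j. if j \<in> R then \<not> y ! j else y ! j) [0..<length y]"

lemma length_flips[simp]: "length (flips y R) = length y"
  by (simp add: flips_def)

lemma nth_flips: "j < length y \<Longrightarrow> flips y R ! j = (if j \<in> R then \<not> y ! j else y ! j)"
  by (simp add: flips_def)

lemma flips_empty[simp]: "flips y {} = y"
  by (simp add: flips_def map_nth)

lemma flips_flip: "i \<notin> R \<Longrightarrow> flips (flip y i) R = flips y (insert i R)"
proof (rule nth_equalityI)
  fix j assume "i \<notin> R" "j < length (flips (flip y i) R)"
  then show "flips (flip y i) R ! j = flips y (insert i R) ! j"
    by (cases "j = i") (auto simp: flips_def flip_def)
qed (simp add: flip_def)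

lemma card_A_i:
  assumes fin: "finite F" and i: "i \<in> F"
  shows "card {R'. R' \<subseteq> F - {i} \<and> card R' = r \<and> f (flips (flip y i) R') < f x}
       = card {R \<in> {R. R \<subseteq> F \<and> card R = Suc r \<and> f (flips y R) < f x}. i \<in> R}"
proof -
  let ?Ai = "{R'. R' \<subseteq> F - {i} \<and> card R' = r \<and> f (flips (flip y i) R') < f x}"
  have inj: "inj_on (insert i) ?Ai"
    by (rule inj_onI) (metis Diff_insert_absorb Diff_subset_conv mem_Collect_eq subset_Diff_insert)
  have img: "insert i ` ?Ai = {R \<in> {R. R \<subseteq> F \<and> card R = Suc r \<and> f (flips y R) < f x}. i \<in> R}"
  proof (rule set_eqI, rule iffI)
    fix R assume "R \<in> insert i ` ?Ai"
    then obtain R' where R': "R' \<in> ?Ai" "R = insert i R'" by blast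
    have "i \<notin> R'" "finite R'" using R' fin by (auto intro: finite_subset)
    then show "R \<in> {R \<in> {R. R \<subseteq> F \<and> card R = Suc r \<and> f (flips y R) < f x}. i \<in> R}"
      using R' i by (auto simp: flips_flip)
  next
    fix R assume R: "R \<in> {R \<in> {R. R \<subseteq> F \<and> card R = Suc r \<and> f (flips y R) < f x}. i \<in> R}"
    have "finite R" using R fin by (auto intro: finite_subset)
    have "R - {i} \<in> ?Ai"
      using R \<open>finite R\<close> by (auto simp: flips_flip insert_absorb)
    moreover have "R = insert i (R - {i})" using R by auto
    ultimately show "R \<in> insert i ` ?Ai" by blast
  qed
  show ?thesis using card_image[OF inj] img by simp
qed

lemma loop_improve:
  "finite F \<Longrightarrow> real (card {R. R \<subseteq> F \<and> card R = r \<and> f (flips y R) < f x}) / real (card F choose r)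
     \<le> measure_pmf.prob (hyp_loop f x y F) {zc. f (fst zc) < f x}"
proof (induction f x y F arbitrary: r rule: hyp_loop.induct)
  case (1 f x y F)
  let ?A = "\<lambda>r. {R. R \<subseteq> F \<and> card R = r \<and> f (flips y R) < f x}"
  have cardA: "card (?A r) \<le> card F choose r" for r
  proof -
    have "card (?A r) \<le> card {R. R \<subseteq> F \<and> card R = r}"
      by (rule card_mono) (use "1.prems" in auto)
    then show ?thesis using n_subsets[OF "1.prems"] by simp
  qed
  show ?case
  proof (cases "F = {} \<or> infinite F \<or> f y < f x")
    case True
    show ?thesis
    proof (cases "f y < f x")
      case True
      then have "measure_pmf.prob (hyp_loop f x y F) {zc. f (fst zc) < f x} = 1"
        by (subst hyp_loop.simps) simp
      moreover have "real (card (?A r)) / real (card F choose r) \<le> 1"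
        using cardA[of r] by (simp add: divide_le_eq_1 linorder_le_less_linear)
      ultimately show ?thesis by simp
    next
      case False
      with True "1.prems" have F: "F = {}" by auto
      show ?thesis
      proof (cases r)
        case 0
        have "?A r = {}" using F False 0 by auto
        then have "card (?A r) = 0" by (metis card.empty)
        then show ?thesis by (metis of_nat_0 div_0 measure_nonneg)
      next
        case (Suc r')
        then show ?thesis using F by simp
      qed
    qed
  next
    case False
    then have fin: "finite F" "F \<noteq> {}" and ny: "\<not> f y < f x" by auto
    show ?thesis
    proof (cases r)
      case 0
      have "?A r = {}"
      proof (rule equals0I)
        fix R assume "R \<in> ?A r"
        then have R: "R \<subseteq> F" "card R = r" "f (flips y R) < f x" by auto
        then have "R = {}" using 0 fin by (metis card_0_eq finite_subset)
        then show False using R(3) ny by simp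
      qed
      then have "card (?A r) = 0" by (metis card.empty)
      then show ?thesis by (metis of_nat_0 div_0 measure_nonneg)
    next
      case (Suc r')
      define N where "N = card F"
      have N: "N > 0" using fin by (simp add: N_def card_gt_0_iff)
      let ?Ai = "\<lambda>i. {R'. R' \<subseteq> F - {i} \<and> card R' = r' \<and> f (flips (flip y i) R') < f x}"
      have IH: "real (card (?Ai i)) / real ((N - 1) choose r')
          \<le> measure_pmf.prob (hyp_loop f x (flip y i) (F - {i})) {zc. f (fst zc) < f x}" if "i \<in> F" for i
        using "1.IH"[OF False _ _, of i r'] that fin by (simp add: set_pmf_of_set N_def)
      have vim: "(\<lambda>(z, c). (z, Suc c)) -` {zc. f (fst zc) < f x} = {zc. f (fst zc) < f x}"
        by auto
      have vim2: "{y. f (fst (case y of (z, c) \<Rightarrow> (z, Suc c))) < f x} = {zc. f (fst zc) < f x}"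
        by auto
      have eq: "measure_pmf.prob (hyp_loop f x y F) {zc. f (fst zc) < f x}
          = (\<Sum>i\<in>F. measure_pmf.prob (hyp_loop f x (flip y i) (F - {i})) {zc. f (fst zc) < f x}) / real N"
        using False fin by (subst hyp_loop.simps) (simp add: prob_bind_pmf_of_set measure_map_pmf vim vim2 N_def)
      have sumA: "(\<Sum>i\<in>F. card (?Ai i)) = Suc r' * card (?A (Suc r'))"
      proof -
        have "(\<Sum>i\<in>F. card (?Ai i)) = (\<Sum>i\<in>F. card {R \<in> ?A (Suc r'). i \<in> R})"
          by (rule sum.cong) (simp_all add: card_A_i fin)
        also have "\<dots> = Suc r' * card (?A (Suc r'))"
        proof (rule sum_multicount)
          show "finite (?A (Suc r'))"
            by (rule finite_subset[of _ "Pow F"]) (use fin in auto)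
          show "\<forall>j\<in>?A (Suc r'). card {i \<in> F. i \<in> j} = Suc r'"
          proof
            fix j assume "j \<in> ?A (Suc r')"
            then have "{i \<in> F. i \<in> j} = j" "card j = Suc r'" by auto
            then show "card {i \<in> F. i \<in> j} = Suc r'" by simp
          qed
        qed (use fin in auto)
        finally show ?thesis .
      qed
      have binom: "N * ((N - 1) choose r') = Suc r' * (N choose Suc r')"
        using Suc_times_binomial[of r' "N - 1"] N by simp
      show ?thesis
      proof (cases "N choose Suc r' = 0")
        case True
        then have "real (card F choose r) = 0" using Suc by (simp add: N_def)
        then show ?thesis by (simp only: div_by_0 measure_nonneg)
      next
        case nz: False
        have nz2: "(N - 1) choose r' > 0"
        proof (rule ccontr)
          assume "\<not> (N - 1) choose r' > 0"
          then have "Suc r' * (N choose Suc r') = 0" using binom by simp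
          then show False using nz by simp
        qed
        have "real (card (?A r)) / real (card F choose r)
            = (\<Sum>i\<in>F. real (card (?Ai i))) / real ((N - 1) choose r') / real N"
        proof -
          have "(\<Sum>i\<in>F. real (card (?Ai i))) = real (Suc r') * real (card (?A (Suc r')))"
            by (simp only: of_nat_sum[symmetric] sumA of_nat_mult)
          moreover have "real N * real ((N - 1) choose r') = real (Suc r') * real (N choose Suc r')"
            by (simp only: of_nat_mult[symmetric] binom)
          ultimately have "(\<Sum>i\<in>F. real (card (?Ai i))) / real ((N - 1) choose r') / real N
             = (real (Suc r') * real (card (?A (Suc r')))) / (real (Suc r') * real (N choose Suc r'))"
            by (simp only: divide_divide_eq_left mult.commute[of "real ((N - 1) choose r')"])
          also have "\<dots> = real (card (?A (Suc r'))) / real (N choose Suc r')"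
            by (rule mult_divide_mult_cancel_left) simp
          finally show ?thesis using Suc by (simp add: N_def)
        qed
        also have "\<dots> = (\<Sum>i\<in>F. real (card (?Ai i)) / real ((N - 1) choose r')) / real N"
          by (simp add: sum_divide_distrib)
        also have "\<dots> \<le> (\<Sum>i\<in>F. measure_pmf.prob (hyp_loop f x (flip y i) (F - {i})) {zc. f (fst zc) < f x}) / real N"
          by (intro divide_right_mono sum_mono IH) simp_all
        also have "\<dots> = measure_pmf.prob (hyp_loop f x y F) {zc. f (fst zc) < f x}"
          using eq by simp
        finally show ?thesis .
      qed
    qed
  qed
qed


definition Tcnt :: "nat \<Rightarrow> bool list \<Rightarrow> nat" where
  "Tcnt n z = card {i\<in>{2..<n}. z ! i}"

definition ucnt :: "bool list \<Rightarrow> nat" where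
  "ucnt z = of_bool (z ! 0) + of_bool (z ! 1)"

lemma sum_if_const: "finite A \<Longrightarrow> (\<Sum>i\<in>A. if P i then (c::real) else 0) = c * real (card {i\<in>A. P i})"
  by (simp add: sum.inter_filter[symmetric])

lemma split_lessThan: "2 \<le> n \<Longrightarrow> {..<n} = {0,1} \<union> {2..<(n::nat)}"
  by auto

lemma L_formula:
  assumes "2 \<le> n"
  shows "(\<Sum>i<n. if z ! i then P_star eps n i else 0)
      = real (ucnt z) * (1/3 - eps/4) + real (Tcnt n z) * ((1/3 + eps/2) / (real n - 2))"
proof -
  have "(\<Sum>i<n. if z ! i then P_star eps n i else 0)
      = (\<Sum>i\<in>{0,1}. if z ! i then P_star eps n i else 0) + (\<Sum>i\<in>{2..<n}. if z ! i then P_star eps n i else 0)"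
    using assms by (subst split_lessThan) (auto intro: sum.union_disjoint)
  also have "(\<Sum>i\<in>{2..<n}. if z ! i then P_star eps n i else 0)
      = (\<Sum>i\<in>{2..<n}. if z ! i then (1/3 + eps/2) / (real n - 2) else 0)"
    by (rule sum.cong) (auto simp: P_star_def)
  also have "\<dots> = (1/3 + eps/2) / (real n - 2) * real (Tcnt n z)"
    by (simp add: sum_if_const Tcnt_def)
  finally show ?thesis by (simp add: ucnt_def P_star_def)
qed

lemma total_P:
  assumes "3 \<le> n"
  shows "(\<Sum>i<n. P_star eps n i) = 1"
proof -
  have "(\<Sum>i<n. P_star eps n i) = (\<Sum>i\<in>{0,1}. P_star eps n i) + (\<Sum>i\<in>{2..<n}. P_star eps n i)"
    using assms by (subst split_lessThan) (auto intro: sum.union_disjoint)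
  also have "(\<Sum>i\<in>{2..<n}. P_star eps n i) = (\<Sum>i\<in>{2..<n}. (1/3 + eps/2) / (real n - 2))"
    by (rule sum.cong) (auto simp: P_star_def)
  also have "\<dots> = 1/3 + eps/2" using assms by (simp add: of_nat_diff)
  finally show ?thesis by (simp add: P_star_def)
qed

lemma f_formula:
  assumes "3 \<le> n" "length z = n"
  shows "makespan (P_star eps n) z = max (real (ucnt z) * (1/3 - eps/4) + real (Tcnt n z) * ((1/3 + eps/2) / (real n - 2)))
             (1 - (real (ucnt z) * (1/3 - eps/4) + real (Tcnt n z) * ((1/3 + eps/2) / (real n - 2))))"
proof -
  have "(\<Sum>i<n. if z ! i then 0 else P_star eps n i) = (\<Sum>i<n. P_star eps n i) - (\<Sum>i<n. if z ! i then P_star eps n i else 0)"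
    by (simp add: sum_subtractf[symmetric]) (rule sum.cong, auto)
  then show ?thesis using assms L_formula[of n z eps] total_P[of n eps]
    by (simp add: makespan_def)
qed


lemma flips_T:
  assumes len: "length x = n" and R: "R \<subseteq> {..<n}"
  shows "Tcnt n (flips x R) = card {i\<in>{2..<n}-R. x!i} + card {i\<in>{2..<n}\<inter>R. \<not> x!i}"
    and "Tcnt n x = card {i\<in>{2..<n}-R. x!i} + card {i\<in>{2..<n}\<inter>R. x!i}"
    and "card {i\<in>{2..<n}\<inter>R. x!i} + card {i\<in>{2..<n}\<inter>R. \<not> x!i} = card ({2..<n}\<inter>R)"
    and "card {i\<in>{2..<n}-R. x!i} \<le> card ({2..<n}-R)"
proof -
  have "{i\<in>{2..<n}. flips x R ! i} = {i\<in>{2..<n}-R. x!i} \<union> {i\<in>{2..<n}\<inter>R. \<not> x!i}"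
    using len by (auto simp: nth_flips)
  then show "Tcnt n (flips x R) = card {i\<in>{2..<n}-R. x!i} + card {i\<in>{2..<n}\<inter>R. \<not> x!i}"
    unfolding Tcnt_def by (simp add: card_Un_disjoint disjoint_iff)
  have "{i\<in>{2..<n}. x ! i} = {i\<in>{2..<n}-R. x!i} \<union> {i\<in>{2..<n}\<inter>R. x!i}" by auto
  then show "Tcnt n x = card {i\<in>{2..<n}-R. x!i} + card {i\<in>{2..<n}\<inter>R. x!i}"
    unfolding Tcnt_def by (simp add: card_Un_disjoint disjoint_iff)
  have "{2..<n}\<inter>R = {i\<in>{2..<n}\<inter>R. x!i} \<union> {i\<in>{2..<n}\<inter>R. \<not> x!i}" by auto
  then show "card {i\<in>{2..<n}\<inter>R. x!i} + card {i\<in>{2..<n}\<inter>R. \<not> x!i} = card ({2..<n}\<inter>R)"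
    by (metis (no_types, lifting) card_Un_disjoint disjoint_iff finite_Int finite_atLeastLessThan
        finite_subset mem_Collect_eq subsetI)
  show "card {i\<in>{2..<n}-R. x!i} \<le> card ({2..<n}-R)"
    by (rule card_mono) auto
qed

lemma prob_from_set:
  assumes sub: "S \<subseteq> {R. R \<subseteq> {..<n} \<and> card R = r \<and> f (flips x R) < f x}"
    and rat: "1/2 \<le> real (card S) / real (n choose r)"
  shows "1/2 \<le> measure_pmf.prob (hyp_loop f x x {..<n}) {zc. f (fst zc) < f x}"
proof -
  have fin: "finite {R. R \<subseteq> {..<n} \<and> card R = r \<and> f (flips x R) < f x}"
    by (rule finite_subset[of _ "Pow {..<n}"]) auto
  have "card S \<le> card {R. R \<subseteq> {..<n} \<and> card R = r \<and> f (flips x R) < f x}"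
    by (rule card_mono[OF fin sub])
  then have "real (card S) / real (n choose r)
     \<le> real (card {R. R \<subseteq> {..<n} \<and> card R = r \<and> f (flips x R) < f x}) / real (n choose r)"
    by (simp add: divide_right_mono)
  also have "\<dots> \<le> measure_pmf.prob (hyp_loop f x x {..<n}) {zc. f (fst zc) < f x}"
    using loop_improve[of "{..<n}" r f x x] by simp
  finally show ?thesis using rat by linarith
qed

lemma binom_bound: "(2*h+2) choose (h+1) \<le> 4 * ((2*h) choose h)"
proof -
  have e1: "Suc h * (Suc (2*h+1) choose Suc h) = Suc (2*h+1) * ((2*h+1) choose h)"
    by (rule Suc_times_binomial)
  have e2: "(2*h+1 - h) * ((2*h+1) choose h) = (2*h+1) * ((2*h+1 - 1) choose h)"
    by (rule binomial_absorb_comp)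
  have "Suc (2*h+1) = Suc h * 2" by simp
  then have "Suc h * (Suc (2*h+1) choose Suc h) = Suc h * (2 * ((2*h+1) choose h))"
    using e1 by (metis mult.assoc mult.commute)
  then have X: "Suc (2*h+1) choose Suc h = 2 * ((2*h+1) choose h)"
    by (simp only: mult_cancel1) simp
  have "2*h+1 - h = Suc h" "2*h+1-1 = 2*h" by simp_all
  then have "Suc h * ((2*h+1) choose h) = (2*h+1) * ((2*h) choose h)"
    using e2 by simp
  also have "\<dots> \<le> Suc h * (2 * ((2*h) choose h))" by simp
  finally have "(2*h+1) choose h \<le> 2 * ((2*h) choose h)"
    by (simp only: mult_le_cancel1)
  moreover have "2*h+2 = Suc (2*h+1)" "h+1 = Suc h" by simp_all
  ultimately show ?thesis using X by simp
qed

lemma improve_prob: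
  fixes eps :: real and h n :: nat and x :: "bool list"
  defines "f \<equiv> makespan (P_star eps n)"
  assumes eps: "0 < eps" "eps < 1/3" and h: "1 \<le> h" and n: "n = 2*h+2" and len: "length x = n"
    and nonopt: "f x > 1/2"
  shows "1/2 \<le> measure_pmf.prob (hyp_loop f x x {..<n}) {zc. f (fst zc) < f x}"
proof -
  define b where "b = 1/3 - eps/4"
  define s where "s = (1/3 + eps/2) / (real n - 2)"
  define L where "L z = real (ucnt z) * b + real (Tcnt n z) * s" for z
  have n3: "3 \<le> n" using h n by simp
  have fL: "f z = 1/2 + \<bar>L z - 1/2\<bar>" if "length z = n" for z
  proof -
    have "f z = max (L z) (1 - L z)"
      using f_formula[OF n3 that, of eps] unfolding f_def L_def b_def s_def by simp
    moreover have "max y (1 - y) = 1/2 + \<bar>y - 1/2\<bar>" for y :: real by arith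
    ultimately show ?thesis by simp
  qed
  have rn: "real n - 2 = 2 * real h" using n by simp
  have s_pos: "s > 0" using eps rn h by (simp add: s_def)
  have hs: "real h * s = (1/3 + eps/2)/2" using rn h by (simp add: s_def field_simps)
  have bhs: "b + real h * s = 1/2" using hs by (simp add: b_def)
  have hsb: "real h * s < b" using hs eps by (simp add: b_def)
  have Dx: "0 < \<bar>L x - 1/2\<bar>" using fL[OF len] nonopt by simp
  show ?thesis
  proof (cases "x!0 = x!1")
    case False
    then have u: "ucnt x = 1" by (cases "x!0") (auto simp: ucnt_def)
    define T where "T = Tcnt n x"
    have Lx: "L x - 1/2 = real T * s - real h * s" using u bhs by (simp add: L_def T_def)
    have "T \<noteq> h" using Dx Lx by auto
    then consider (gt) "h < T" | (lt) "T < h" by linarith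
    then show ?thesis
    proof cases
      case gt
      define G where "G = {i\<in>{2..<n}. x!i}"
      have cG: "card G = T" by (simp add: G_def T_def Tcnt_def)
      have sub: "(\<lambda>i. {i}) ` G \<subseteq> {R. R \<subseteq> {..<n} \<and> card R = 1 \<and> f (flips x R) < f x}"
      proof
        fix R assume "R \<in> (\<lambda>i. {i}) ` G"
        then obtain i where i: "i \<in> G" "R = {i}" by blast
        have iR: "{i} \<subseteq> {..<n}" using i by (auto simp: G_def)
        have u': "ucnt (flips x {i}) = 1" using u i len n by (auto simp: ucnt_def nth_flips G_def)
        have e1: "{j\<in>{2..<n}\<inter>{i}. \<not> x!j} = {}" "{j\<in>{2..<n}\<inter>{i}. x!j} = {i}" using i by (auto simp: G_def)
        have T': "Tcnt n (flips x {i}) + 1 = T"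
          using flips_T(1,2)[OF len iR] e1 by (simp add: T_def)
        have Lz: "L (flips x {i}) - 1/2 = real T * s - s - real h * s"
        proof -
          have "real T = real (Tcnt n (flips x {i})) + 1" using T' by linarith
          then show ?thesis using u' bhs by (simp add: L_def algebra_simps)
        qed
        have "real T \<ge> real h + 1" using gt by simp
        then have "real T * s \<ge> (real h + 1) * s" using s_pos by (simp add: mult_right_mono)
        then have "\<bar>L (flips x {i}) - 1/2\<bar> < \<bar>L x - 1/2\<bar>" using Lz Lx s_pos
          by (simp add: algebra_simps abs_if)
        then have "f (flips x {i}) < f x" using fL[OF len] fL[of "flips x {i}"] len by simp
        then show "R \<in> {R. R \<subseteq> {..<n} \<and> card R = 1 \<and> f (flips x R) < f x}" using i iR by simp
      qed
      have inj: "inj_on (\<lambda>i. {i}) G" by (auto simp: inj_on_def)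
      have "1/2 \<le> real (card ((\<lambda>i. {i}) ` G)) / real (n choose 1)"
        using card_image[OF inj] cG gt n by (simp add: field_simps)
      then show ?thesis using prob_from_set[OF sub] by simp
    next
      case lt
      define G where "G = {i\<in>{2..<n}. \<not> x!i}"
      have cGT: "card G + T = 2*h"
      proof -
        have e: "{2..<n} = G \<union> {i\<in>{2..<n}. x!i}" by (auto simp: G_def)
        have "card (G \<union> {i\<in>{2..<n}. x!i}) = card G + card {i\<in>{2..<n}. x!i}"
          by (rule card_Un_disjoint) (auto simp: G_def)
        then have "card {2..<n} = card G + T"
          by (simp only: e[symmetric] T_def Tcnt_def)
        then show ?thesis using n by simp
      qed
      have sub: "(\<lambda>i. {i}) ` G \<subseteq> {R. R \<subseteq> {..<n} \<and> card R = 1 \<and> f (flips x R) < f x}"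
      proof
        fix R assume "R \<in> (\<lambda>i. {i}) ` G"
        then obtain i where i: "i \<in> G" "R = {i}" by blast
        have iR: "{i} \<subseteq> {..<n}" using i by (auto simp: G_def)
        have u': "ucnt (flips x {i}) = 1" using u i len n by (auto simp: ucnt_def nth_flips G_def)
        have e1: "{j\<in>{2..<n}\<inter>{i}. \<not> x!j} = {i}" "{j\<in>{2..<n}\<inter>{i}. x!j} = {}" using i by (auto simp: G_def)
        have T': "Tcnt n (flips x {i}) = T + 1"
          using flips_T(1,2)[OF len iR] e1 by (simp add: T_def)
        have Lz: "L (flips x {i}) - 1/2 = real T * s + s - real h * s"
          using u' bhs T' by (simp add: L_def algebra_simps)
        have "real T + 1 \<le> real h" using lt by simp
        then have "(real T + 1) * s \<le> real h * s" using s_pos by (simp add: mult_right_mono)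
        then have "\<bar>L (flips x {i}) - 1/2\<bar> < \<bar>L x - 1/2\<bar>" using Lz Lx s_pos
          by (simp add: algebra_simps abs_if)
        then have "f (flips x {i}) < f x" using fL[OF len] fL[of "flips x {i}"] len by simp
        then show "R \<in> {R. R \<subseteq> {..<n} \<and> card R = 1 \<and> f (flips x R) < f x}" using i iR by simp
      qed
      have inj: "inj_on (\<lambda>i. {i}) G" by (auto simp: inj_on_def)
      have "1/2 \<le> real (card ((\<lambda>i. {i}) ` G)) / real (n choose 1)"
        using card_image[OF inj] cGT lt n by (simp add: field_simps)
      then show ?thesis using prob_from_set[OF sub] by simp
    qed
  next
    case True
    define X where "X = {R'. R' \<subseteq> {2..<n} \<and> card R' = h}"
    have cX: "card X = (2*h) choose h"
      using n_subsets[of "{2..<n}" h] n by (simp add: X_def)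
    have sub1: "insert j R' \<in> {R. R \<subseteq> {..<n} \<and> card R = h+1 \<and> f (flips x R) < f x}"
      if j: "j = 0 \<or> j = 1" and R': "R' \<in> X" for j R'
    proof -
      let ?R = "insert j R'"
      have R'sub: "R' \<subseteq> {2..<n}" "card R' = h" using R' by (auto simp: X_def)
      have fin: "finite R'" using R'sub(1) by (rule finite_subset) simp
      have jn: "j \<notin> R'" using j R'sub by auto
      have cR: "card ?R = h+1" using fin jn R'sub by simp
      have Rsub: "?R \<subseteq> {..<n}" using R'sub j n by auto
      have i1: "{2..<n} \<inter> ?R = R'" using R'sub j by auto
      have i2: "{2..<n} - ?R = {2..<n} - R'" using j by auto
      have c2: "card ({2..<n} - R') = h"
        using R'sub fin n by (simp add: card_Diff_subset)
      define c0 where "c0 = card {i\<in>{2..<n}-?R. x!i}"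
      define a where "a = card {i\<in>{2..<n}\<inter>?R. x!i}"
      define b' where "b' = card {i\<in>{2..<n}\<inter>?R. \<not> x!i}"
      have Tz: "Tcnt n (flips x ?R) = c0 + b'" and Tx: "Tcnt n x = c0 + a"
        and ab: "a + b' = h" and c0h: "c0 \<le> h"
        using flips_T[OF len Rsub] i1 i2 c2 R'sub by (simp_all add: c0_def a_def b'_def)
      have uz: "ucnt (flips x ?R) = 1"
        using True j R'sub len n by (auto simp: ucnt_def nth_flips)
      define A where "A = real a * s"
      define C0 where "C0 = real c0 * s"
      define H where "H = real h * s"
      have A: "0 \<le> A" "A \<le> H" using ab s_pos by (simp_all add: A_def H_def mult_right_mono)
      have C: "0 \<le> C0" "C0 \<le> H" using c0h s_pos by (simp_all add: C0_def H_def mult_right_mono)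
      have "real (a + b') = real h" using ab by simp
      then have rb: "real b' = real h - real a" by simp
      have bs: "real b' * s = H - A" by (simp add: rb A_def H_def left_diff_distrib)
      have Lz: "L (flips x ?R) - 1/2 = C0 - A"
        using uz Tz bs bhs by (simp add: L_def C0_def H_def algebra_simps)
      have "\<bar>L (flips x ?R) - 1/2\<bar> < \<bar>L x - 1/2\<bar>"
      proof (cases "x!0")
        case xt: True
        then have "ucnt x = 2" using True by (simp add: ucnt_def)
        then have "L x - 1/2 = b + C0 + A - H" using Tx bhs by (simp add: L_def C0_def A_def H_def algebra_simps)
        then show ?thesis using Lz A C hsb by (simp add: H_def abs_if)
      next
        case xf: False
        then have "ucnt x = 0" using True by (simp add: ucnt_def)
        then have "L x - 1/2 = C0 + A - H - b" using Tx bhs by (simp add: L_def C0_def A_def H_def algebra_simps)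
        then show ?thesis using Lz A C hsb by (simp add: H_def abs_if)
      qed
      then have "f (flips x ?R) < f x" using fL[OF len] fL[of "flips x ?R"] len by simp
      then show ?thesis using cR Rsub by simp
    qed
    have sub: "insert 0 ` X \<union> insert 1 ` X \<subseteq> {R. R \<subseteq> {..<n} \<and> card R = h+1 \<and> f (flips x R) < f x}"
      using sub1 by blast
    have inj0: "inj_on (insert j) X" if "j = 0 \<or> j = (1::nat)" for j
    proof (rule inj_onI)
      fix A B assume "A \<in> X" "B \<in> X" "insert j A = insert j B"
      moreover have "j \<notin> A" "j \<notin> B" using \<open>A \<in> X\<close> \<open>B \<in> X\<close> that by (auto simp: X_def)
      ultimately show "A = B" by (metis insert_ident)
    qed
    have disj: "insert 0 ` X \<inter> insert 1 ` X = {}"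
      by (auto simp: X_def)
    have finX: "finite X" unfolding X_def
      by (rule finite_subset[of _ "Pow {2..<n}"]) auto
    have cS: "card (insert 0 ` X \<union> insert 1 ` X) = 2 * ((2*h) choose h)"
      using card_Un_disjoint[OF finite_imageI[OF finX] finite_imageI[OF finX] disj]
        card_image[OF inj0[of 0]] card_image[OF inj0[of 1]] cX by simp
    have bb: "n choose (h+1) \<le> 4 * ((2*h) choose h)" using binom_bound[of h] n by simp
    have pos: "0 < n choose (h+1)" using n by simp
    have "1/2 \<le> real (card (insert 0 ` X \<union> insert 1 ` X)) / real (n choose (h+1))"
    proof -
      have "real (n choose (h+1)) \<le> 4 * real ((2*h) choose h)"
        using bb by (metis of_nat_le_iff of_nat_mult of_nat_numeral)
      then show ?thesis using cS pos by (simp add: field_simps)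
    qed
    then show ?thesis using prob_from_set[OF sub] by simp
  qed
qed


lemma drift_generic:
  fixes M :: "('a \<times> nat) pmf" and rk :: "'a \<Rightarrow> nat" and K p :: real and A :: "('a \<times> nat) set"
  assumes K: "real n \<le> K * p" "0 \<le> K" and P: "p \<le> measure_pmf.prob M A" and p: "0 \<le> p"
    and supp: "\<And>y c. (y, c) \<in> set_pmf M \<Longrightarrow> c \<le> n \<and> rk y + (if (y, c) \<in> A then 1 else 0) \<le> rk0"
  shows "(\<integral>\<^sup>+ yc. (ennreal (real (snd yc)) + ennreal (K * real (rk (fst yc)))) \<partial>M) \<le> ennreal (K * real rk0)"
proof -
  let ?g = "\<lambda>yc. ennreal (real (snd yc)) + ennreal (K * real (rk (fst yc)))"
  have pt: "?g yc + ennreal K * indicator A yc \<le> ennreal (real n + K * real rk0)" if "yc \<in> set_pmf M" for yc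
  proof -
    obtain y c where yc: "yc = (y, c)" by (cases yc)
    have s: "c \<le> n" "rk y + (if (y, c) \<in> A then 1 else 0) \<le> rk0" using supp[of y c] that yc by auto
    show ?thesis
    proof (cases "(y, c) \<in> A")
      case True
      then have "rk y + 1 \<le> rk0" using s by simp
      then have "real (rk y) + 1 \<le> real rk0" by linarith
      then have "K * (real (rk y) + 1) \<le> K * real rk0" using K(2) by (rule mult_left_mono)
      then have "K * real (rk y) + K \<le> K * real rk0" by (simp add: algebra_simps)
      moreover have "real c \<le> real n" using s by simp
      ultimately show ?thesis using True yc K(2)
        by (simp add: ennreal_plus[symmetric] ennreal_mult[symmetric] del: ennreal_plus)
    next
      case False
      then have "rk y \<le> rk0" using s by simp
      then have "K * real (rk y) \<le> K * real rk0" using K(2) by (simp add: mult_left_mono)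
      moreover have "real c \<le> real n" using s by simp
      ultimately show ?thesis using False yc K(2)
        by (simp add: ennreal_plus[symmetric] del: ennreal_plus)
    qed
  qed
  have "(\<integral>\<^sup>+ yc. ?g yc \<partial>M) + ennreal K * emeasure M A = (\<integral>\<^sup>+ yc. (?g yc + ennreal K * indicator A yc) \<partial>M)"
    by (simp add: nn_integral_add nn_integral_cmult_indicator)
  also have "\<dots> \<le> (\<integral>\<^sup>+ yc. ennreal (real n + K * real rk0) \<partial>M)"
    by (rule nn_integral_mono_AE) (simp add: AE_measure_pmf_iff pt)
  also have "\<dots> = ennreal (real n + K * real rk0)"
    by (simp add: measure_pmf.emeasure_space_1)
  finally have I: "(\<integral>\<^sup>+ yc. ?g yc \<partial>M) + ennreal K * emeasure M A \<le> ennreal (real n + K * real rk0)" .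
  have "ennreal (real n) \<le> ennreal K * emeasure M A"
  proof -
    have "ennreal (real n) \<le> ennreal (K * p)" using K by simp
    also have "\<dots> = ennreal K * ennreal p" using K p by (simp add: ennreal_mult)
    also have "\<dots> \<le> ennreal K * emeasure M A"
      using P by (intro mult_left_mono) (simp_all add: measure_pmf.emeasure_eq_measure)
    finally show ?thesis .
  qed
  then have "(\<integral>\<^sup>+ yc. ?g yc \<partial>M) + ennreal (real n) \<le> (\<integral>\<^sup>+ yc. ?g yc \<partial>M) + ennreal K * emeasure M A"
    by (rule add_left_mono)
  also note I
  also have "ennreal (real n + K * real rk0) = ennreal (real n) + ennreal (K * real rk0)"
    using K by (simp add: ennreal_plus)
  finally have "(\<integral>\<^sup>+ yc. ?g yc \<partial>M) + ennreal (real n) \<le> ennreal (real n) + ennreal (K * real rk0)" .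
  then have "ennreal (real n) + (\<integral>\<^sup>+ yc. ?g yc \<partial>M) \<le> ennreal (real n) + ennreal (K * real rk0)"
    by (simp add: add.commute)
  then show ?thesis by (simp add: ennreal_add_left_cancel_le)
qed


lemma f_ge_half:
  assumes "3 \<le> n" "length z = n"
  shows "1/2 \<le> makespan (P_star eps n) z"
proof -
  have "max y (1 - y) \<ge> 1/2" for y :: real by arith
  then show ?thesis using f_formula[OF assms, of eps] by simp
qed

lemma card_Fv:
  assumes "3 \<le> n"
  shows "card (makespan (P_star eps n) ` {ys. length ys = n}) \<le> 3 * (n + 1)"
proof -
  define g where "g = (\<lambda>(u::nat, T::nat). max (real u * (1/3 - eps/4) + real T * ((1/3 + eps/2) / (real n - 2)))
             (1 - (real u * (1/3 - eps/4) + real T * ((1/3 + eps/2) / (real n - 2)))))"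
  have sub: "makespan (P_star eps n) ` {ys. length ys = n} \<subseteq> g ` ({..2} \<times> {..n})"
  proof
    fix v assume "v \<in> makespan (P_star eps n) ` {ys. length ys = n}"
    then obtain z where z: "length z = n" "v = makespan (P_star eps n) z" by blast
    have u: "ucnt z \<le> 2" by (simp add: ucnt_def)
    have "Tcnt n z \<le> card {2..<n}" unfolding Tcnt_def by (rule card_mono) auto
    then have T: "Tcnt n z \<le> n" by simp
    have "v = g (ucnt z, Tcnt n z)" using f_formula[OF assms z(1), of eps] z by (simp add: g_def)
    then show "v \<in> g ` ({..2} \<times> {..n})" using u T by blast
  qed
  have "card (makespan (P_star eps n) ` {ys. length ys = n}) \<le> card (g ` ({..2} \<times> {..n}))"
    by (rule card_mono[OF _ sub]) simp
  also have "\<dots> \<le> card ({..2::nat} \<times> {..n})" by (rule card_image_le) simp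
  also have "\<dots> = 3 * (n + 1)" by (simp add: card_cartesian_product)
  finally show ?thesis .
qed

lemma rank_step:
  fixes Fv :: "real set"
  assumes "finite Fv" "v \<in> Fv" "v \<le> w"
  shows "card {u\<in>Fv. u < v} + (if v < w then 1 else 0) \<le> card {u\<in>Fv. u < w}"
proof (cases "v < w")
  case True
  have "insert v {u\<in>Fv. u < v} \<subseteq> {u\<in>Fv. u < w}" using assms True by auto
  then have "card (insert v {u\<in>Fv. u < v}) \<le> card {u\<in>Fv. u < w}"
    by (rule card_mono[rotated]) (simp add: assms)
  then show ?thesis using True assms by simp
next
  case False
  have "{u\<in>Fv. u < v} \<subseteq> {u\<in>Fv. u < w}" using assms by auto
  then show ?thesis using False by (simp add: card_mono assms)
qed

lemma ia_step_set:
  assumes "(y, c) \<in> set_pmf (ia_step f n x)"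
  shows "length y = length x \<and> c \<le> n \<and> f y \<le> f x"
proof -
  from assms obtain z where z: "(z, c) \<in> set_pmf (hyp_loop f x x {..<n})" "y = (if f z \<le> f x then z else x)"
    by (auto simp: ia_step_def)
  from hyp_loop_set[OF z(1)] have "length z = length x" "c \<le> n" by simp_all
  then show ?thesis using z(2) by auto
qed

lemma ia_step_prob:
  "measure_pmf.prob (hyp_loop f x x {..<n}) {zc. f (fst zc) < f x}
   \<le> measure_pmf.prob (ia_step f n x) {yc. f (fst yc) < f x}"
  unfolding ia_step_def measure_map_pmf
  by (rule measure_pmf.finite_measure_mono) auto

theorem corollary1:
  fixes eps :: real
  assumes "0 < eps" and "eps < 1/3"
  shows "\<exists>C N. \<forall>n\<ge>N. even n \<longrightarrow>
           ia_runtime (makespan (P_star eps n)) n \<le> ennreal (C * real n ^ 2)"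
proof (intro exI allI impI)
  fix n :: nat assume n4: "4 \<le> n" and ev: "even n"
  obtain k where k: "n = 2 * k" using ev by blast
  define h where "h = k - 1"
  have h1: "1 \<le> h" and nh: "n = 2*h+2" using n4 k by (auto simp: h_def)
  have n3: "3 \<le> n" using n4 by simp
  define f where "f = makespan (P_star eps n)"
  define Fv where "Fv = f ` {ys. length ys = n}"
  define rk where "rk z = card {w\<in>Fv. w < f z}" for z
  define K where "K = 2 * real n"
  have finFv: "finite Fv" unfolding Fv_def by (simp add: finite_list_length)
  have cardFv: "card Fv \<le> 3 * (n + 1)" unfolding Fv_def f_def by (rule card_Fv[OF n3])
  have rk_le: "rk z \<le> 3 * (n + 1)" for z
  proof -
    have "rk z \<le> card Fv" unfolding rk_def by (rule card_mono[OF finFv]) auto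
    then show ?thesis using cardFv by simp
  qed
  have cost: "ia_cost f n t x \<le> ennreal (K * real (rk x))" if "length x = n" for t x
    using that
  proof (induction t arbitrary: x)
    case 0
    then show ?case by simp
  next
    case (Suc t)
    show ?case
    proof (cases "is_optimal f n x")
      case True
      then show ?thesis by simp
    next
      case False
      then obtain ys where ys: "length ys = n" "f ys < f x"
        using Suc.prems by (auto simp: is_optimal_def not_le)
      have nonopt: "f x > 1/2" using f_ge_half[OF n3 ys(1), of eps] ys(2) by (simp add: f_def)
      have supp: "c \<le> n \<and> rk y + (if (y, c) \<in> {yc. f (fst yc) < f x} then 1 else 0) \<le> rk x"
        if "(y, c) \<in> set_pmf (ia_step f n x)" for y c
      proof -
        have s: "length y = n" "c \<le> n" "f y \<le> f x" using ia_step_set[OF that] Suc.prems by auto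
        have "f y \<in> Fv" using s(1) by (simp add: Fv_def)
        from rank_step[OF finFv this s(3)] show ?thesis using s by (simp add: rk_def)
      qed
      have P: "1/2 \<le> measure_pmf.prob (ia_step f n x) {yc. f (fst yc) < f x}"
        using improve_prob[OF assms h1 nh Suc.prems] nonopt ia_step_prob[of f x n]
        unfolding f_def by linarith
      have "ia_cost f n (Suc t) x
          = (\<integral>\<^sup>+ yc. (ennreal (real (snd yc)) + ia_cost f n t (fst yc)) \<partial>measure_pmf (ia_step f n x))"
        using False by simp
      also have "\<dots> \<le> (\<integral>\<^sup>+ yc. (ennreal (real (snd yc)) + ennreal (K * real (rk (fst yc)))) \<partial>measure_pmf (ia_step f n x))"
      proof (rule nn_integral_mono_AE)
        show "AE yc in measure_pmf (ia_step f n x). ennreal (real (snd yc)) + ia_cost f n t (fst yc)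
              \<le> ennreal (real (snd yc)) + ennreal (K * real (rk (fst yc)))"
        proof (subst AE_measure_pmf_iff, intro ballI)
          fix yc assume "yc \<in> set_pmf (ia_step f n x)"
          then have "length (fst yc) = n" using ia_step_set[of "fst yc" "snd yc" f n x] Suc.prems by simp
          then show "ennreal (real (snd yc)) + ia_cost f n t (fst yc)
              \<le> ennreal (real (snd yc)) + ennreal (K * real (rk (fst yc)))"
            using Suc.IH by (simp add: add_left_mono)
        qed
      qed
      also have "\<dots> \<le> ennreal (K * real (rk x))"
        by (rule drift_generic[OF _ _ P _ supp]) (simp_all add: K_def)
      finally show ?thesis .
    qed
  qed
  have bound: "ia_cost f n t x \<le> ennreal (K * (3 * (real n + 1)))" if "length x = n" for t x
  proof -
    have "real (rk x) \<le> 3 * (real n + 1)" using rk_le[of x] by (metis of_nat_le_iff of_nat_mult of_nat_numeral of_nat_Suc Suc_eq_plus1 of_nat_add of_nat_1)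
    then have "K * real (rk x) \<le> K * (3 * (real n + 1))" by (simp add: K_def mult_left_mono)
    then show ?thesis using cost[OF that, of t] by (meson ennreal_leI order_trans)
  qed
  have nonempty: "{ys :: bool list. length ys = n} \<noteq> {}"
    by (metis (mono_tags) empty_iff length_replicate mem_Collect_eq)
  have "ia_runtime f n \<le> (\<integral>\<^sup>+ x. ennreal (1 + K * (3 * (real n + 1))) \<partial>measure_pmf (pmf_of_set {xs :: bool list. length xs = n}))"
    unfolding ia_runtime_def
  proof (rule nn_integral_mono_AE, subst AE_measure_pmf_iff, intro ballI)
    fix x assume "x \<in> set_pmf (pmf_of_set {xs :: bool list. length xs = n})"
    then have "length x = n" using nonempty by (simp add: set_pmf_of_set finite_list_length)
    then have "(SUP t. ia_cost f n t x) \<le> ennreal (K * (3 * (real n + 1)))"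
      using bound by (simp add: SUP_least)
    then have "1 + (SUP t. ia_cost f n t x) \<le> 1 + ennreal (K * (3 * (real n + 1)))"
      by (rule add_left_mono)
    also have "\<dots> = ennreal (1 + K * (3 * (real n + 1)))"
      by (simp add: K_def ennreal_plus)
    finally show "1 + (SUP t. ia_cost f n t x) \<le> ennreal (1 + K * (3 * (real n + 1)))" .
  qed
  also have "\<dots> = ennreal (1 + K * (3 * (real n + 1)))"
    by (simp add: measure_pmf.emeasure_space_1)
  also have "\<dots> \<le> ennreal (13 * real n ^ 2)"
  proof (rule ennreal_leI)
    have "1 \<le> real n" using n4 by simp
    moreover have "1 * real n \<le> real n * real n" using \<open>1 \<le> real n\<close> by (intro mult_right_mono) simp_all
    ultimately have "1 + 6 * real n \<le> 7 * real n ^ 2" unfolding power2_eq_square by linarith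
    then show "1 + K * (3 * (real n + 1)) \<le> 13 * real n ^ 2"
      by (simp add: K_def power2_eq_square algebra_simps)
  qed
  finally show "ia_runtime (makespan (P_star eps n)) n \<le> ennreal (13 * real n ^ 2)"
    by (simp add: f_def)
qed

end
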